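(* Let $\kappa>0$ and define $g:\mathbb{R}\to\mathbb{R}$ by $g(t)=\sqrt{1-\kappa t^2}$ if $0\leq t<\sqrt{1/(3\kappa)}$, $g(t)=\frac{1}{3\sqrt{2\kappa}\,t}+\sqrt{\frac16}$ if $t\geq\sqrt{1/(3\kappa)}$, and $g(t)=g(-t)$ for $t<0$. Let $G(t)=\int_0^t g(s)\,ds$ and let $G^{-1}$ denote its inverse function. Then: (1) $\lim_{t\to0}\frac{G^{-1}(t)}{t}=1$; (2) $\lim_{t\to\infty}\frac{G^{-1}(t)}{t}=\sqrt6$; (3) $t\leq G^{-1}(t)\leq\sqrt6\,t$ for all $t\geq0$; (4) $-\frac12\leq \frac{t}{g(t)}g'(t)\leq 0$ for all $t\geq 0$.
   Context: The function $g$ is $C^1$, even, takes values in $(\sqrt{1/6},1]$, and $G$ is a strictly increasing odd $C^2$ bijection of $\mathbb{R}$. *)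

theory Defs
  imports "HOL-Analysis.Analysis"
begin

definition gfun :: "real \<Rightarrow> real \<Rightarrow> real" where
  "gfun \<kappa> t = (let s = \<bar>t\<bar> in
     if s < sqrt (1 / (3 * \<kappa>)) then sqrt (1 - \<kappa> * s\<^sup>2)
     else 1 / (3 * sqrt (2 * \<kappa>) * s) + sqrt (1 / 6))"

definition Gfun :: "real \<Rightarrow> real \<Rightarrow> real" where
  "Gfun \<kappa> t = (if 0 \<le> t then integral {0..t} (gfun \<kappa>)
                 else - integral {t..0} (gfun \<kappa>))"

end

theory Submission
  imports Defs
begin

lemma consts_facts:
  fixes \<kappa> :: real
  assumes k: "\<kappa> > 0"
  shows "sqrt (1/(3*\<kappa>)) > 0" "(sqrt (1/(3*\<kappa>)))^2 = 1/(3*\<kappa>)"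
    "3 * sqrt (2*\<kappa>) * sqrt (1/(3*\<kappa>)) = sqrt 6"
    "sqrt (1/6) = 1 / sqrt 6" "sqrt (1/6) > 0" "2 * sqrt (1/6) \<le> (1::real)"
    "sqrt (1 - \<kappa> * (sqrt (1/(3*\<kappa>)))^2) = 2 * sqrt(1/6)"
proof -
  show "sqrt (1/(3*\<kappa>)) > 0" using k by simp
  show c2: "(sqrt (1/(3*\<kappa>)))^2 = 1/(3*\<kappa>)" using k by simp
  have "(3 * sqrt (2*\<kappa>) * sqrt (1/(3*\<kappa>)))^2 = 6"
    using k by (simp add: power_mult_distrib)
  moreover have "0 \<le> 3 * sqrt (2*\<kappa>) * sqrt (1/(3*\<kappa>))" using k by simp
  ultimately have "sqrt 6 = 3 * sqrt (2*\<kappa>) * sqrt (1/(3*\<kappa>))"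
    by (rule real_sqrt_unique)
  then show "3 * sqrt (2*\<kappa>) * sqrt (1/(3*\<kappa>)) = sqrt 6" by simp
  show "sqrt (1/6) = 1 / sqrt 6" by (simp add: real_sqrt_divide)
  show "sqrt (1/6) > (0::real)" by simp
  have "(2 * sqrt (1/6::real))^2 = 4/6" by (simp add: power_mult_distrib)
  then have e: "sqrt (4/6) = 2 * sqrt (1/6::real)"
    by (rule real_sqrt_unique) simp
  have "sqrt (4/6) \<le> sqrt (1::real)" by (rule real_sqrt_le_mono) simp
  then show "2 * sqrt (1/6) \<le> (1::real)" unfolding e by simp
  have "1 - \<kappa> * (sqrt (1/(3*\<kappa>)))^2 = 2/3" using k c2 by simp
  moreover have "(2 * sqrt (1/6::real))^2 = 2/3" by (simp add: power_mult_distrib)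
  ultimately show "sqrt (1 - \<kappa> * (sqrt (1/(3*\<kappa>)))^2) = 2 * sqrt(1/6)"
    by (simp add: real_sqrt_unique)
qed


context
  fixes \<kappa> :: real
  assumes k: "\<kappa> > 0"
begin

abbreviation "cc \<equiv> sqrt (1/(3*\<kappa>))"
abbreviation "b0 \<equiv> sqrt (1/6::real)"
abbreviation "AA \<equiv> 3 * sqrt (2*\<kappa>)"

lemma cc_pos: "cc > 0" using consts_facts(1)[OF k] .
lemma AA_pos: "AA > 0" using k by simp
lemma b0_pos: "b0 > 0" by simp
lemma AAcc: "AA * cc = sqrt 6" using consts_facts(3)[OF k] .
lemma b0_inv: "b0 * sqrt 6 = 1" by (simp add: real_sqrt_divide)
lemma b0_sq: "b0 * b0 = 1/6" by simp
lemma kcc: "\<kappa> * cc^2 = 1/3" using consts_facts(2)[OF k] k by simp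

lemma eq_at_c: "sqrt (1 - \<kappa> * cc^2) = 1/(AA*cc) + b0"
  using consts_facts(7)[OF k] AAcc consts_facts(4)[OF k] by simp

lemma g_alt: "gfun \<kappa> t = (if \<bar>t\<bar> \<le> cc then sqrt (1 - \<kappa>*\<bar>t\<bar>^2) else 1/(AA*\<bar>t\<bar>) + b0)"
proof -
  consider "\<bar>t\<bar> < cc" | "\<bar>t\<bar> = cc" | "\<bar>t\<bar> > cc" by linarith
  then show ?thesis
  proof cases
    case 2
    then show ?thesis unfolding gfun_def Let_def using eq_at_c by simp
  qed (auto simp: gfun_def Let_def)
qed

lemma small_case: "\<bar>t\<bar> < cc \<Longrightarrow> \<kappa> * t^2 < 1/3"
proof -
  assume "\<bar>t\<bar> < cc"
  then have "\<bar>t\<bar>^2 < cc^2" by (intro power_strict_mono) auto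
  then have "\<kappa> * \<bar>t\<bar>^2 < \<kappa> * cc^2" using k by (simp only: mult_strict_left_mono)
  then have "\<kappa> * \<bar>t\<bar>^2 < 1/3" using kcc by linarith
  then show ?thesis by simp
qed

lemma big_case: "cc \<le> \<bar>t\<bar> \<Longrightarrow> 0 < 1/(AA*\<bar>t\<bar>) \<and> 1/(AA*\<bar>t\<bar>) \<le> b0"
proof -
  assume h: "cc \<le> \<bar>t\<bar>"
  have "AA * cc \<le> AA * \<bar>t\<bar>" using h AA_pos by simp
  have tpos: "\<bar>t\<bar> > 0" using cc_pos h by linarith
  have p: "0 < (AA*\<bar>t\<bar>) * (AA*cc)" using AA_pos cc_pos tpos by (intro mult_pos_pos) simp_all
  have "1/(AA*\<bar>t\<bar>) \<le> 1/(AA*cc)"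
    by (rule divide_left_mono[OF \<open>AA * cc \<le> AA * \<bar>t\<bar>\<close> _ p]) simp
  moreover have "1/(AA*cc) = b0" using AAcc consts_facts(4)[OF k] by simp
  moreover have "0 < 1/(AA*\<bar>t\<bar>)" using AA_pos tpos by simp
  ultimately show ?thesis by simp
qed

lemma g_bounds: "b0 < gfun \<kappa> t \<and> gfun \<kappa> t \<le> 1"
proof (cases "\<bar>t\<bar> < cc")
  case True
  then have h: "\<kappa> * t^2 < 1/3" by (rule small_case)
  have g: "gfun \<kappa> t = sqrt (1 - \<kappa> * t^2)" using True by (simp add: gfun_def Let_def)
  have "b0 < sqrt (1 - \<kappa> * t^2)" using h by (intro real_sqrt_less_mono) simp
  moreover have "sqrt (1 - \<kappa> * t^2) \<le> 1" using k by simp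
  ultimately show ?thesis using g by simp
next
  case False
  then have g: "gfun \<kappa> t = 1/(AA*\<bar>t\<bar>) + b0" by (simp add: gfun_def Let_def)
  have "cc \<le> \<bar>t\<bar>" using False by simp
  from big_case[OF this] have "0 < 1/(AA*\<bar>t\<bar>)" "1/(AA*\<bar>t\<bar>) \<le> b0" by auto
  then show ?thesis using g consts_facts(6)[OF k] by simp
qed

lemma g0: "gfun \<kappa> 0 = 1" using cc_pos by (simp add: gfun_def)

lemma g_cont: "continuous_on UNIV (gfun \<kappa>)"
proof -
  have "continuous_on UNIV (\<lambda>t. if \<bar>t\<bar> \<le> cc then sqrt (1 - \<kappa>*\<bar>t\<bar>^2) else 1/(AA*\<bar>t\<bar>) + b0)"
  proof (rule continuous_on_cases_le)
    show "continuous_on {t \<in> UNIV. \<bar>t\<bar> \<le> cc} (\<lambda>t. sqrt (1 - \<kappa>*\<bar>t\<bar>^2))"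
      by (intro continuous_intros)
    show "continuous_on {t \<in> UNIV. cc \<le> \<bar>t\<bar>} (\<lambda>t. 1/(AA*\<bar>t\<bar>) + b0)"
      using cc_pos AA_pos by (intro continuous_intros) auto
    show "continuous_on UNIV (abs :: real \<Rightarrow> real)" by (intro continuous_intros)
    show "\<And>t. t \<in> UNIV \<Longrightarrow> \<bar>t\<bar> = cc \<Longrightarrow> sqrt (1 - \<kappa>*\<bar>t\<bar>^2) = 1/(AA*\<bar>t\<bar>) + b0"
      using eq_at_c by simp
  qed
  moreover have "gfun \<kappa> = (\<lambda>t. if \<bar>t\<bar> \<le> cc then sqrt (1 - \<kappa>*\<bar>t\<bar>^2) else 1/(AA*\<bar>t\<bar>) + b0)"
    using g_alt by auto
  ultimately show ?thesis by simp
qed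

lemma g_int: "gfun \<kappa> integrable_on {a..b}"
  by (rule integrable_continuous_interval) (rule continuous_on_subset[OF g_cont], simp)

lemma G_diff: "a \<le> b \<Longrightarrow> Gfun \<kappa> b - Gfun \<kappa> a = integral {a..b} (gfun \<kappa>)"
proof -
  assume ab: "a \<le> b"
  consider "0 \<le> a" | "b < 0" | "a < 0" "0 \<le> b" by linarith
  then show ?thesis
  proof cases
    case 1
    have "integral {0..a} (gfun \<kappa>) + integral {a..b} (gfun \<kappa>) = integral {0..b} (gfun \<kappa>)"
      using 1 ab by (intro Henstock_Kurzweil_Integration.integral_combine g_int) auto
    then show ?thesis using 1 ab by (simp add: Gfun_def)
  next
    case 2
    have "integral {a..b} (gfun \<kappa>) + integral {b..0} (gfun \<kappa>) = integral {a..0} (gfun \<kappa>)"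
      using 2 ab by (intro Henstock_Kurzweil_Integration.integral_combine g_int) auto
    then show ?thesis using 2 ab by (simp add: Gfun_def)
  next
    case 3
    have "integral {a..0} (gfun \<kappa>) + integral {0..b} (gfun \<kappa>) = integral {a..b} (gfun \<kappa>)"
      using 3 ab by (intro Henstock_Kurzweil_Integration.integral_combine g_int) auto
    then show ?thesis using 3 ab by (simp add: Gfun_def)
  qed
qed

lemma G0: "Gfun \<kappa> 0 = 0" by (simp add: Gfun_def)

lemma G_bounds: "a \<le> b \<Longrightarrow> (b-a)*b0 \<le> Gfun \<kappa> b - Gfun \<kappa> a \<and> Gfun \<kappa> b - Gfun \<kappa> a \<le> b - a"
proof -
  assume ab: "a \<le> b"
  have "integral {a..b} (\<lambda>x. b0) \<le> integral {a..b} (gfun \<kappa>)"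
    using g_bounds by (intro integral_le g_int) (auto intro: less_imp_le)
  moreover have "integral {a..b} (gfun \<kappa>) \<le> integral {a..b} (\<lambda>x. 1)"
    using g_bounds by (intro integral_le g_int) auto
  ultimately show ?thesis using ab G_diff[OF ab] by (simp add: content_real mult.commute)
qed

lemma G_deriv: "(Gfun \<kappa> has_real_derivative gfun \<kappa> x) (at x)"
proof -
  have "((\<lambda>u. integral {x-1..u} (gfun \<kappa>)) has_vector_derivative gfun \<kappa> x) (at x within {x-1..x+1})"
    by (rule integral_has_vector_derivative) (auto intro: continuous_on_subset[OF g_cont])
  then have "((\<lambda>u. integral {x-1..u} (gfun \<kappa>)) has_real_derivative gfun \<kappa> x) (at x)"
    by (simp add: has_real_derivative_iff_has_vector_derivative at_within_Icc_at)
  then have d: "((\<lambda>u. Gfun \<kappa> (x-1) + integral {x-1..u} (gfun \<kappa>)) has_real_derivative gfun \<kappa> x) (at x)"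
    by (auto intro!: derivative_eq_intros)
  show ?thesis
  proof (rule has_field_derivative_transform_within_open[OF d, of "{x-1<..<x+1}"])
    fix u assume "u \<in> {x-1<..<x+1}"
    then show "Gfun \<kappa> (x-1) + integral {x-1..u} (gfun \<kappa>) = Gfun \<kappa> u"
      using G_diff[of "x-1" u] by simp
  qed auto
qed

lemma G_strict: "a < b \<Longrightarrow> Gfun \<kappa> a < Gfun \<kappa> b"
proof -
  assume "a < b"
  then have "0 < (b-a)*b0" by simp
  then show ?thesis using G_bounds[of a b] \<open>a<b\<close> by linarith
qed

lemma G_cont: "continuous_on S (Gfun \<kappa>)"
  using G_deriv by (meson DERIV_isCont continuous_at_imp_continuous_on)

lemma G_inj: "inj (Gfun \<kappa>)"
  by (metis G_strict injI linorder_neqE_linordered_idom order_less_irrefl)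

lemma G_surj: "surj (Gfun \<kappa>)"
proof -
  have "\<exists>x. Gfun \<kappa> x = y" for y
  proof (cases "0 \<le> y")
    case True
    have "y \<le> Gfun \<kappa> (y/b0)" using G_bounds[of 0 "y/b0"] True G0 by simp
    then show ?thesis using IVT'[of "Gfun \<kappa>" 0 y "y/b0"] True G0 G_cont by auto
  next
    case False
    have "Gfun \<kappa> (y/b0) \<le> y" using G_bounds[of "y/b0" 0] False G0 by (simp add: divide_nonpos_pos)
    then show ?thesis using IVT'[of "Gfun \<kappa>" "y/b0" y 0] False G0 G_cont
      by (auto simp: divide_nonpos_pos)
  qed
  then show ?thesis by (metis surjI)
qed

lemma invG1: "inv (Gfun \<kappa>) (Gfun \<kappa> x) = x" using G_inj by (simp add: inv_f_f)
lemma invG2: "Gfun \<kappa> (inv (Gfun \<kappa>) y) = y" using G_surj by (simp add: surj_f_inv_f)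


lemma d1: "\<kappa> * t^2 < 1 \<Longrightarrow> ((\<lambda>s. sqrt (1 - \<kappa> * s^2)) has_real_derivative (-(\<kappa>*t)/sqrt(1-\<kappa>*t^2))) (at t)"
  by (auto intro!: derivative_eq_intros simp: field_simps)

lemma d2: "t > 0 \<Longrightarrow> ((\<lambda>s. 1/(AA * s) + b0) has_real_derivative (-1/(AA*t^2))) (at t)"
  using AA_pos by (auto intro!: derivative_eq_intros simp: field_simps power2_eq_square)


lemma D_eq: "-(\<kappa>*cc)/sqrt(1-\<kappa>*cc^2) = -1/(AA*cc^2)"
proof -
  have s7: "sqrt(1-\<kappa>*cc^2) = 2 / sqrt 6" using consts_facts(7)[OF k] consts_facts(4)[OF k] by simp
  have "AA*cc^2 = (AA*cc)*cc" by (simp only: power2_eq_square mult.assoc)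
  then have a: "AA*cc^2 = sqrt 6 * cc" using AAcc by simp
  have s6: "sqrt 6 * sqrt 6 = (6::real)" by simp
  have "\<kappa> * cc * cc = 1/3" using kcc by (simp add: power2_eq_square mult.assoc)
  then have "(\<kappa>*cc) / (2 / sqrt 6) = 1 / (sqrt 6 * cc)"
    using cc_pos s6 by (simp add: field_simps)
  then show ?thesis using s7 a by simp
qed

lemma deriv_g: "0 \<le> t \<Longrightarrow> (gfun \<kappa> has_real_derivative
   (if t < cc then -(\<kappa>*t)/sqrt(1-\<kappa>*t^2) else -1/(AA*t^2))) (at t)"
proof -
  assume t0: "0 \<le> t"
  consider "t < cc" | "t = cc" | "t > cc" by linarith
  then show ?thesis
  proof cases
    case 1
    have "\<kappa> * t^2 < 1/3" using 1 t0 by (intro small_case) simp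
    then have d: "((\<lambda>s. sqrt (1 - \<kappa> * s^2)) has_real_derivative (-(\<kappa>*t)/sqrt(1-\<kappa>*t^2))) (at t)"
      by (intro d1) simp
    have "(gfun \<kappa> has_real_derivative (-(\<kappa>*t)/sqrt(1-\<kappa>*t^2))) (at t)"
    proof (rule has_field_derivative_transform_within_open[OF d, of "{-cc<..<cc}"])
      fix s :: real assume "s \<in> {-cc<..<cc}"
      then have "\<bar>s\<bar> \<le> cc" by auto
      then show "sqrt (1 - \<kappa> * s^2) = gfun \<kappa> s" using g_alt[of s] by simp
    qed (use 1 t0 in auto)
    then show ?thesis using 1 by simp
  next
    case 3
    have d: "((\<lambda>s. 1/(AA * s) + b0) has_real_derivative (-1/(AA*t^2))) (at t)"
      by (rule d2) (use 3 cc_pos in linarith)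
    have "(gfun \<kappa> has_real_derivative (-1/(AA*t^2))) (at t)"
    proof (rule has_field_derivative_transform_within_open[OF d, of "{cc<..}"])
      fix s :: real assume "s \<in> {cc<..}"
      then have "cc < s" by simp
      then have "\<bar>s\<bar> > cc" "\<bar>s\<bar> = s" using cc_pos by linarith+
      then show "1/(AA * s) + b0 = gfun \<kappa> s" using g_alt[of s] by simp
    qed (use 3 in auto)
    then show ?thesis using 3 by simp
  next
    case 2
    have dl: "((\<lambda>s. sqrt (1 - \<kappa> * s^2)) has_real_derivative (-(\<kappa>*cc)/sqrt(1-\<kappa>*cc^2))) (at cc)"
      using kcc by (intro d1) simp
    then have dl': "((\<lambda>s. sqrt (1 - \<kappa> * s^2)) has_real_derivative (-1/(AA*cc^2))) (at cc)"
      using D_eq by simp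
    have dr: "((\<lambda>s. 1/(AA * s) + b0) has_real_derivative (-1/(AA*cc^2))) (at cc)"
      using cc_pos by (intro d2) simp
    have l: "(gfun \<kappa> has_real_derivative (-1/(AA*cc^2))) (at cc within {..cc})"
    proof (rule has_field_derivative_transform_within[OF has_field_derivative_at_within[OF dl'] cc_pos])
      fix s :: real assume "s \<in> {..cc}" "dist s cc < cc"
      then have "\<bar>s\<bar> \<le> cc" by (auto simp: dist_real_def)
      then show "sqrt (1 - \<kappa> * s^2) = gfun \<kappa> s" using g_alt[of s] by simp
    qed auto
    have r: "(gfun \<kappa> has_real_derivative (-1/(AA*cc^2))) (at cc within {cc..})"
    proof (rule has_field_derivative_transform_within[OF has_field_derivative_at_within[OF dr] cc_pos])
      fix s :: real assume "s \<in> {cc..}" "dist s cc < cc"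
      then have s1: "cc \<le> s" by simp
      then have s: "cc \<le> s" "\<bar>s\<bar> = s" using cc_pos by linarith+
      show "1/(AA * s) + b0 = gfun \<kappa> s"
      proof (cases "s = cc")
        case True
        have h1: "gfun \<kappa> cc = sqrt(1-\<kappa>*cc^2)" using g_alt[of cc] cc_pos
          by (simp only: abs_of_pos if_True order_refl)
        then show ?thesis using eq_at_c True by metis
      next
        case False then show ?thesis using g_alt[of s] s by simp
      qed
    qed auto
    have "((\<lambda>y. (gfun \<kappa> y - gfun \<kappa> cc) / (y - cc)) \<longlongrightarrow> (-1/(AA*cc^2))) (at cc within ({..cc} \<union> {cc..}))"
      using l r unfolding has_field_derivative_iff Lim_within_Un by blast
    moreover have "{..cc} \<union> {cc..} = (UNIV :: real set)" by auto
    ultimately have "(gfun \<kappa> has_real_derivative (-1/(AA*cc^2))) (at cc)"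
      unfolding has_field_derivative_iff by simp
    then show ?thesis using 2 by simp
  qed
qed

lemma part4: "0 \<le> t \<Longrightarrow> - 1 / 2 \<le> t / gfun \<kappa> t * deriv (gfun \<kappa>) t
              \<and> t / gfun \<kappa> t * deriv (gfun \<kappa>) t \<le> 0"
proof -
  assume t0: "0 \<le> t"
  have dv: "deriv (gfun \<kappa>) t = (if t < cc then -(\<kappa>*t)/sqrt(1-\<kappa>*t^2) else -1/(AA*t^2))"
    using deriv_g[OF t0] by (rule DERIV_imp_deriv)
  show ?thesis
  proof (cases "t < cc")
    case True
    have u: "\<kappa> * t^2 < 1/3" using True t0 by (intro small_case) simp
    have u0: "0 \<le> \<kappa> * t^2" using k by simp
    define q where "q = sqrt (1 - \<kappa>*t^2)"
    have g: "gfun \<kappa> t = q" using True t0 by (simp add: gfun_def q_def)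
    have qq: "q * q = 1 - \<kappa>*t^2" unfolding q_def using u by simp
    have q0: "q > 0" unfolding q_def using u by simp
    have e: "t / gfun \<kappa> t * deriv (gfun \<kappa>) t = -(\<kappa>*t^2) / (1 - \<kappa>*t^2)"
      using True q0 unfolding dv g qq[symmetric] q_def[symmetric] by (simp add: power2_eq_square)
    have p: "1 - \<kappa>*t^2 > 0" using u by simp
    show ?thesis unfolding e using u u0 p by (simp add: divide_le_eq le_divide_eq)
  next
    case False
    have tp: "t > 0" using False cc_pos by linarith
    define w where "w = 1/(AA*t)"
    from big_case[of t] False t0 have w: "0 < w" "w \<le> b0" by (auto simp: w_def)
    have g: "gfun \<kappa> t = w + b0" using g_alt[of t] False t0 eq_at_c by (simp add: w_def)
    have e: "t / gfun \<kappa> t * deriv (gfun \<kappa>) t = - w / (w + b0)"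
      unfolding dv g using False tp AA_pos by (simp add: w_def power2_eq_square field_simps)
    have p: "w + b0 > 0" using w by simp
    show ?thesis unfolding e using w p by (simp add: divide_le_eq le_divide_eq)
  qed
qed


lemma part3: "0 \<le> t \<Longrightarrow> t \<le> inv (Gfun \<kappa>) t \<and> inv (Gfun \<kappa>) t \<le> sqrt 6 * t"
proof -
  assume t0: "0 \<le> t"
  define x where "x = inv (Gfun \<kappa>) t"
  have Gx: "Gfun \<kappa> x = t" unfolding x_def by (rule invG2)
  have x0: "0 \<le> x"
  proof (rule ccontr)
    assume "\<not> 0 \<le> x"
    then have "Gfun \<kappa> x < Gfun \<kappa> 0" by (intro G_strict) simp
    then show False using Gx G0 t0 by simp
  qed
  from G_bounds[OF x0] have b: "x * b0 \<le> t" "t \<le> x" using Gx G0 by simp_all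
  have "x = x * b0 * sqrt 6" using b0_inv by (simp add: mult.assoc)
  also have "\<dots> \<le> t * sqrt 6" using b by (intro mult_right_mono) simp_all
  finally show ?thesis using b unfolding x_def[symmetric] by (simp add: mult.commute)
qed

lemma part1: "((\<lambda>t. inv (Gfun \<kappa>) t / t) \<longlongrightarrow> 1) (at 0)"
proof -
  have i0: "inv (Gfun \<kappa>) 0 = 0" using invG1[of 0] G0 by simp
  have c: "isCont (inv (Gfun \<kappa>)) (Gfun \<kappa> 0)"
    by (rule isCont_inverse_function[where d=1 and f="Gfun \<kappa>" and g="inv (Gfun \<kappa>)" and x=0])
       (auto simp: invG1 intro: DERIV_isCont[OF G_deriv])
  have "DERIV (inv (Gfun \<kappa>)) 0 :> inverse (gfun \<kappa> (inv (Gfun \<kappa>) 0))"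
  proof (rule DERIV_inverse_function[where f="Gfun \<kappa>" and g="inv (Gfun \<kappa>)" and x=0 and a="-1" and b=1])
    show "DERIV (Gfun \<kappa>) (inv (Gfun \<kappa>) 0) :> gfun \<kappa> (inv (Gfun \<kappa>) 0)" by (rule G_deriv)
    show "gfun \<kappa> (inv (Gfun \<kappa>) 0) \<noteq> 0" using i0 g0 by simp
    show "isCont (inv (Gfun \<kappa>)) 0" using c G0 by simp
  qed (auto simp: invG2)
  then show ?thesis unfolding DERIV_def using i0 g0 by simp
qed

lemma part2: "((\<lambda>t. inv (Gfun \<kappa>) t / t) \<longlongrightarrow> sqrt 6) at_top"
proof -
  have ev: "eventually (\<lambda>x. gfun \<kappa> x / 1 = 1/(AA*x) + b0) at_top"
  proof (rule eventually_at_top_linorderI[of "cc + 1"])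
    fix x assume "cc + 1 \<le> x"
    then have "\<bar>x\<bar> = x" "\<not> \<bar>x\<bar> \<le> cc" using cc_pos by linarith+
    then show "gfun \<kappa> x / 1 = 1/(AA*x) + b0" using g_alt[of x] by simp
  qed
  have "LIM x at_top. AA * x :> at_top"
    by (rule filterlim_tendsto_pos_mult_at_top[OF tendsto_const AA_pos filterlim_ident])
  then have "((\<lambda>x. inverse (AA * x)) \<longlongrightarrow> 0) at_top" by (rule tendsto_inverse_0_at_top)
  then have "((\<lambda>x. 1/(AA*x)) \<longlongrightarrow> 0) at_top" by (simp only: inverse_eq_divide)
  from tendsto_add[OF this tendsto_const[of b0]]
  have "((\<lambda>x. 1/(AA*x) + b0) \<longlongrightarrow> b0) at_top" by simp
  then have lim: "((\<lambda>x. gfun \<kappa> x / 1) \<longlongrightarrow> b0) at_top"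
    using tendsto_cong[OF ev] by blast
  have Df: "eventually (\<lambda>x. DERIV (Gfun \<kappa>) x :> gfun \<kappa> x) at_top"
    by (intro always_eventually allI G_deriv)
  have Dg: "eventually (\<lambda>x. DERIV (\<lambda>x. x) x :> 1) at_top"
    by (intro always_eventually allI DERIV_ident)
  have "((\<lambda>x. Gfun \<kappa> x / x) \<longlongrightarrow> b0) at_top"
    by (rule lhospital_at_top_at_top[where g' = "\<lambda>_. 1" and f' = "gfun \<kappa>", OF filterlim_ident _ Df Dg lim])
       simp
  then have "((\<lambda>x. inverse (Gfun \<kappa> x / x)) \<longlongrightarrow> inverse b0) at_top"
    by (rule tendsto_inverse) simp
  moreover have ib0: "inverse b0 = sqrt 6" using b0_inv by (rule inverse_unique)
  ultimately have L: "((\<lambda>x. x / Gfun \<kappa> x) \<longlongrightarrow> sqrt 6) at_top"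
    by (simp only: inverse_divide)
  have F: "filterlim (inv (Gfun \<kappa>)) at_top at_top"
  proof (rule filterlim_at_top_mono[OF filterlim_ident])
    show "eventually (\<lambda>x. x \<le> inv (Gfun \<kappa>) x) at_top"
      using part3 by (intro eventually_at_top_linorderI[of 0]) auto
  qed
  have "((\<lambda>t. inv (Gfun \<kappa>) t / Gfun \<kappa> (inv (Gfun \<kappa>) t)) \<longlongrightarrow> sqrt 6) at_top"
    using filterlim_compose[OF L F] by simp
  then show ?thesis by (simp add: invG2)
qed

end

theorem lemma2p1:
  fixes \<kappa> :: real
  assumes "\<kappa> > 0"
  shows "(((\<lambda>t. inv (Gfun \<kappa>) t / t) \<longlongrightarrow> 1) (at 0))
    \<and> (((\<lambda>t. inv (Gfun \<kappa>) t / t) \<longlongrightarrow> sqrt 6) at_top)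
    \<and> (\<forall>t\<ge>0. t \<le> inv (Gfun \<kappa>) t \<and> inv (Gfun \<kappa>) t \<le> sqrt 6 * t)
    \<and> (\<forall>t\<ge>0. - 1 / 2 \<le> t / gfun \<kappa> t * deriv (gfun \<kappa>) t
              \<and> t / gfun \<kappa> t * deriv (gfun \<kappa>) t \<le> 0)"
  using part1[OF assms] part2[OF assms] part3[OF assms] part4[OF assms] by blast

end
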